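(* Let $m$ be a given positive integer and let $f:C(\mathbb{R}^{n})\rightarrow\mathbb{R}$ be a distribution of the form $f = \sum_{k = 1}^{m}a_{k}\delta_{(\theta_{k},\rho_{k})}$, with $a_{i}\in\mathbb{R}\setminus\{0\}$, $\rho_{i}\in(0, \infty)$, $\theta_{i}\in\mathbb{S}^{n - 1}$, $1\leq i\leq m$, such that $a_{i}\neq a_{j}$ for $i\neq j$ and the hyperplanes $\langle x,\theta_{1}\rangle = \rho_{1},\dots,\langle x,\theta_{m}\rangle = \rho_{m}$ are all distinct (as subsets of $\mathbb{R}^{n}$). Assume that the spherical mean transform of $f$ is given at $n\cdot m(m - 1) + 2n + 1$ points such that there is no hyperplane in $\mathbb{R}^{n}$ which contains more than $n$ of these given points. Then the parameters $a_{1},\rho_{1},\theta_{1},\dots,a_{m},\rho_{m}, \theta_{m}$ can be uniquely recovered.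
   Context: $C(\mathbb{R}^{n})$ denotes the continuous real functions on $\mathbb{R}^{n}$, $C(\mathbb{R}^{+})$ the continuous real functions on $\mathbb{R}^{+}=[0,\infty)$, and $\mathbb{S}^{n-1}$ the unit sphere in $\mathbb{R}^n$. For $\theta\in\mathbb{S}^{n-1}$ and $\rho>0$, $\delta_{(\theta,\rho)}$ is the distribution $\delta_{(\theta,\rho)}(\phi)=\int_{\langle x,\theta\rangle=\rho}\phi(x)\,dm_{x}$ (integration over the hyperplane with respect to its surface measure). For a function $\phi\in C(\mathbb{R}^n)$ and a point $y\in\mathbb{R}^{n}$, the spherical mean transform (SMT) is $R_{y}\phi(t) = t^{n-1}\int_{|\theta|=1}\phi(y+t\theta)\,d\theta$, $t\geq 0$; its dual is $R_{y}^{\ast}\Lambda(z)=\Lambda(|y-z|)$ for $\Lambda\in C(\mathbb{R}^{+})$. For a distribution $T:C(\mathbb{R}^{n})\to\mathbb{R}$, the SMT of $T$ at $y$ is the map $R_{y}T:C(\mathbb{R}^{+})\to\mathbb{R}$, $(R_{y}T)(\Lambda)=T(\Lambda(|y-\cdot|))$ (whenever defined). "The SMT of $f$ is given at a point $y$" means $R_{y}f$ is known. *)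

theory Defs
  imports "HOL-Analysis.Analysis"
begin

text \<open>The ambient space R^n is a euclidean_space type 'a, with n = DIM('a).
  The hyperplane {x. x \<bullet> \<theta> = \<rho>} (\<theta> a unit vector) is parametrised isometrically
  by R^(n-1) (coordinates u :: nat \<Rightarrow> real on {..<n-1}) through an orthonormal
  frame of the orthogonal complement of \<theta>; its surface measure is the
  image of (n-1)-dimensional Lebesgue measure.\<close>

definition hp_frame :: "'a::euclidean_space \<Rightarrow> nat \<Rightarrow> 'a" where
  "hp_frame \<theta> = (SOME e. (\<forall>i<DIM('a) - 1. \<forall>j<DIM('a) - 1. e i \<bullet> e j = (if i = j then 1 else 0))
                         \<and> (\<forall>i<DIM('a) - 1. e i \<bullet> \<theta> = 0))"

definition hyperplane_delta :: "'a::euclidean_space \<Rightarrow> real \<Rightarrow> ('a \<Rightarrow> real) \<Rightarrow> real" where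
  "hyperplane_delta \<theta> \<rho> \<phi> =
     integral\<^sup>L (PiM {..<DIM('a) - 1} (\<lambda>_. lborel))
       (\<lambda>u. \<phi> (\<rho> *\<^sub>R \<theta> + (\<Sum>i<DIM('a) - 1. u i *\<^sub>R hp_frame \<theta> i)))"

definition delta_sum :: "nat \<Rightarrow> (nat \<Rightarrow> real) \<Rightarrow> (nat \<Rightarrow> 'a::euclidean_space) \<Rightarrow> (nat \<Rightarrow> real)
    \<Rightarrow> ('a \<Rightarrow> real) \<Rightarrow> real" where
  "delta_sum m a \<theta> \<rho> \<phi> = (\<Sum>k<m. a k * hyperplane_delta (\<theta> k) (\<rho> k) \<phi>)"

definition smt_dist :: "'a::euclidean_space \<Rightarrow> (('a \<Rightarrow> real) \<Rightarrow> real) \<Rightarrow> (real \<Rightarrow> real) \<Rightarrow> real" where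
  "smt_dist y T \<Lambda> = T (\<lambda>z. \<Lambda> (norm (y - z)))"

definition test_fn :: "(real \<Rightarrow> real) \<Rightarrow> bool" where
  "test_fn \<Lambda> \<longleftrightarrow> continuous_on {0..} \<Lambda> \<and> (\<exists>R. \<forall>t\<ge>R. \<Lambda> t = 0)"

definition admissible_params :: "nat \<Rightarrow> (nat \<Rightarrow> real) \<Rightarrow> (nat \<Rightarrow> 'a::euclidean_space) \<Rightarrow> (nat \<Rightarrow> real) \<Rightarrow> bool" where
  "admissible_params m a \<theta> \<rho> \<longleftrightarrow>
     (\<forall>k<m. a k \<noteq> 0 \<and> \<rho> k > 0 \<and> norm (\<theta> k) = 1) \<and>
     (\<forall>i<m. \<forall>j<m. i \<noteq> j \<longrightarrow> a i \<noteq> a j) \<and>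
     (\<forall>i<m. \<forall>j<m. i \<noteq> j \<longrightarrow> {x. x \<bullet> \<theta> i = \<rho> i} \<noteq> {x. x \<bullet> \<theta> j = \<rho> j})"

definition no_hyperplane_contains_more :: "nat \<Rightarrow> nat \<Rightarrow> (nat \<Rightarrow> 'a::euclidean_space) \<Rightarrow> bool" where
  "no_hyperplane_contains_more n N y \<longleftrightarrow>
     (\<forall>w c. w \<noteq> 0 \<longrightarrow> card {j. j < N \<and> y j \<bullet> w = c} \<le> n)"

end

theory Submission
  imports Defs "HOL-Analysis.Analysis"
begin

definition orthoframe :: "'a::euclidean_space \<Rightarrow> (nat \<Rightarrow> 'a) \<Rightarrow> bool" where
  "orthoframe \<theta> e \<longleftrightarrow> (\<forall>i<DIM('a) - 1. \<forall>j<DIM('a) - 1. e i \<bullet> e j = (if i = j then 1 else 0))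
                         \<and> (\<forall>i<DIM('a) - 1. e i \<bullet> \<theta> = 0)"

lemma frame_ex:
  fixes \<theta> :: "'a::euclidean_space"
  assumes "norm \<theta> = 1"
  shows "\<exists>e. orthoframe \<theta> e"
proof -
  have sub: "subspace {x. \<theta> \<bullet> x = 0}" by (rule subspace_hyperplane)
  obtain B where B: "B \<subseteq> {x. \<theta> \<bullet> x = 0}" "pairwise orthogonal B"
    "\<And>x. x \<in> B \<Longrightarrow> norm x = 1" "independent B" "card B = dim {x. \<theta> \<bullet> x = 0}"
    using orthonormal_basis_subspace[OF sub] by metis
  have "\<theta> \<noteq> 0" using assms by auto
  then have cB: "card B = DIM('a) - 1" using B(5) dim_hyperplane by metis
  have fB: "finite B" using B(4) independent_bound by blast
  obtain h where h: "bij_betw h {0..<card B} B" using ex_bij_betw_nat_finite[OF fB] by blast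
  have hB: "\<And>i. i < DIM('a) - 1 \<Longrightarrow> h i \<in> B" using h cB by (auto simp: bij_betw_def)
  have hinj: "\<And>i j. i < DIM('a) - 1 \<Longrightarrow> j < DIM('a) - 1 \<Longrightarrow> h i = h j \<Longrightarrow> i = j"
    using h cB by (auto simp: bij_betw_def inj_on_def)
  have "orthoframe \<theta> h"
    unfolding orthoframe_def
  proof (intro conjI allI impI)
    fix i j assume i: "i < DIM('a) - 1" and j: "j < DIM('a) - 1"
    show "h i \<bullet> h j = (if i = j then 1 else 0)"
    proof (cases "i = j")
      case True
      then show ?thesis using B(3)[OF hB[OF i]] by (simp add: dot_square_norm)
    next
      case False
      then have "h i \<noteq> h j" using hinj i j by blast
      then show ?thesis using B(2) hB[OF i] hB[OF j] False
        by (auto simp: pairwise_def orthogonal_def)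
    qed
  next
    fix i assume i: "i < DIM('a) - 1"
    show "h i \<bullet> \<theta> = 0" using B(1) hB[OF i] by (auto simp: inner_commute)
  qed
  then show ?thesis by blast
qed

lemma hp_frame_ok:
  fixes \<theta> :: "'a::euclidean_space"
  assumes "norm \<theta> = 1"
  shows "orthoframe \<theta> (hp_frame \<theta>)"
  using someI_ex[OF frame_ex[OF assms]] unfolding hp_frame_def orthoframe_def by simp

lemma frame_inner_sum:
  fixes \<theta> :: "'a::euclidean_space"
  assumes "orthoframe \<theta> e" "j < DIM('a) - 1"
  shows "(\<Sum>i<DIM('a) - 1. w i *\<^sub>R e i) \<bullet> e j = w j"
proof -
  have "(\<Sum>i<DIM('a) - 1. w i *\<^sub>R e i) \<bullet> e j = (\<Sum>i<DIM('a) - 1. w i * (e i \<bullet> e j))"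
    by (simp add: inner_sum_left)
  also have "\<dots> = (\<Sum>i<DIM('a) - 1. (if i = j then w j else 0))"
    by (rule sum.cong) (use assms in \<open>auto simp: orthoframe_def\<close>)
  also have "\<dots> = w j" using assms(2) by simp
  finally show ?thesis .
qed

lemma frame_inner_sum_theta:
  fixes \<theta> :: "'a::euclidean_space"
  assumes "orthoframe \<theta> e"
  shows "(\<Sum>i<DIM('a) - 1. w i *\<^sub>R e i) \<bullet> \<theta> = 0"
  using assms by (simp add: orthoframe_def inner_sum_left)

lemma frame_expand:
  fixes \<theta> :: "'a::euclidean_space"
  assumes of: "orthoframe \<theta> e" and n1: "norm \<theta> = 1"
  shows "v = (v \<bullet> \<theta>) *\<^sub>R \<theta> + (\<Sum>i<DIM('a) - 1. (v \<bullet> e i) *\<^sub>R e i)"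
proof (rule ccontr)
  let ?k = "DIM('a) - 1"
  define r where "r = v - ((v \<bullet> \<theta>) *\<^sub>R \<theta> + (\<Sum>i<?k. (v \<bullet> e i) *\<^sub>R e i))"
  assume "v \<noteq> (v \<bullet> \<theta>) *\<^sub>R \<theta> + (\<Sum>i<?k. (v \<bullet> e i) *\<^sub>R e i)"
  then have r0: "r \<noteq> 0" by (simp add: r_def)
  have tt: "\<theta> \<bullet> \<theta> = 1" using n1 by (simp add: dot_square_norm)
  have eth: "\<And>i. i < ?k \<Longrightarrow> e i \<bullet> \<theta> = 0" and ee: "\<And>i j. i < ?k \<Longrightarrow> j < ?k \<Longrightarrow> e i \<bullet> e j = (if i = j then 1 else 0)"
    using of by (auto simp: orthoframe_def)
  have rth: "r \<bullet> \<theta> = 0"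
    using frame_inner_sum_theta[OF of] tt by (simp add: r_def inner_diff_left inner_add_left)
  have re: "\<And>j. j < ?k \<Longrightarrow> r \<bullet> e j = 0"
  proof -
    fix j assume j: "j < ?k"
    show "r \<bullet> e j = 0"
      using frame_inner_sum[OF of j, of "\<lambda>i. v \<bullet> e i"] eth[OF j] inner_commute[of \<theta> "e j"]
      by (simp add: r_def inner_diff_left inner_add_left)
  qed
  have einj: "inj_on e {..<?k}"
    by (rule inj_onI) (metis ee lessThan_iff zero_neq_one)
  define S where "S = insert r (insert \<theta> (e ` {..<?k}))"
  have thn: "\<theta> \<notin> e ` {..<?k}" using eth tt by (auto simp: inner_commute)
  have rn: "r \<notin> insert \<theta> (e ` {..<?k})" using rth re r0 tt ee by fastforce
  have cS: "card S = ?k + 2"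
    using thn rn einj by (simp add: S_def card_image)
  have "pairwise orthogonal S"
    unfolding S_def pairwise_def orthogonal_def
    using rth re eth ee by (auto simp: inner_commute)
  moreover have "0 \<notin> S" unfolding S_def using r0 n1 ee by force
  ultimately have "independent S" by (rule pairwise_orthogonal_independent)
  then have "card S \<le> DIM('a)" using independent_bound by blast
  then show False using cS by simp
qed

lemma frame_norm:
  fixes \<theta> :: "'a::euclidean_space"
  assumes of: "orthoframe \<theta> e" and n1: "norm \<theta> = 1"
  shows "(norm (s *\<^sub>R \<theta> + (\<Sum>i<DIM('a) - 1. w i *\<^sub>R e i)))\<^sup>2 = s\<^sup>2 + (\<Sum>i<DIM('a) - 1. (w i)\<^sup>2)"
proof -
  let ?k = "DIM('a) - 1"
  let ?S = "\<Sum>i<?k. w i *\<^sub>R e i"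
  have tt: "\<theta> \<bullet> \<theta> = 1" using n1 by (simp add: dot_square_norm)
  have "?S \<bullet> ?S = (\<Sum>j<?k. w j * (?S \<bullet> e j))"
    by (simp add: inner_sum_right)
  also have "\<dots> = (\<Sum>j<?k. (w j)\<^sup>2)"
    by (rule sum.cong) (use frame_inner_sum[OF of] in \<open>auto simp: power2_eq_square\<close>)
  finally have SS: "?S \<bullet> ?S = (\<Sum>j<?k. (w j)\<^sup>2)" .
  have St: "?S \<bullet> \<theta> = 0" by (rule frame_inner_sum_theta[OF of])
  show ?thesis
    unfolding power2_norm_eq_inner
    using SS St tt by (simp add: inner_add_left inner_add_right inner_commute power2_eq_square)
qed


abbreviation LM :: "nat \<Rightarrow> (nat \<Rightarrow> real) measure" where
  "LM k \<equiv> PiM {..<k} (\<lambda>_. lborel)"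

definition Phi :: "nat \<Rightarrow> real \<Rightarrow> (real \<Rightarrow> real) \<Rightarrow> real" where
  "Phi k s \<Lambda> = integral\<^sup>L (LM k) (\<lambda>v. \<Lambda> (sqrt (s\<^sup>2 + (\<Sum>i<k. (v i)\<^sup>2))))"

interpretation lb_prod: product_sigma_finite "\<lambda>_::nat. lborel :: real measure"
  by standard

lemma LM_shift:
  "distr (LM k) (LM k) (\<lambda>u. \<lambda>i\<in>{..<k}. u i + c i) = LM k"
proof (rule lb_prod.PiM_eqI)
  show "finite {..<k}" by simp
  show "sets (distr (LM k) (LM k) (\<lambda>u. \<lambda>i\<in>{..<k}. u i + c i)) = sets (LM k)" by simp
  fix A assume A: "\<And>i. i \<in> {..<k} \<Longrightarrow> A i \<in> sets (lborel :: real measure)"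
  have meas: "(\<lambda>u. \<lambda>i\<in>{..<k}. u i + c i) \<in> measurable (LM k) (LM k)"
    by measurable
  have pre: "(\<lambda>u. \<lambda>i\<in>{..<k}. u i + c i) -` (Pi\<^sub>E {..<k} A) \<inter> space (LM k)
      = Pi\<^sub>E {..<k} (\<lambda>i. (\<lambda>x. x + c i) -` A i)"
    by (auto simp: space_PiM PiE_iff add.commute)
  have Ai: "\<And>i. i \<in> {..<k} \<Longrightarrow> emeasure lborel ((\<lambda>x. x + c i) -` A i) = emeasure lborel (A i)"
  proof -
    fix i assume i: "i \<in> {..<k}"
    have "emeasure lborel (A i) = emeasure (distr lborel borel ((+) (c i))) (A i)"
      by (simp add: lborel_distr_plus)
    also have "\<dots> = emeasure lborel ((+) (c i) -` A i \<inter> space lborel)"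
    proof (rule emeasure_distr)
      show "(+) (c i) \<in> borel_measurable lborel" by simp
      show "A i \<in> sets borel" using A[OF i] by simp
    qed
    moreover have "(\<lambda>x. x + c i) = (+) (c i)" by (auto simp: add.commute)
    ultimately show "emeasure lborel ((\<lambda>x. x + c i) -` A i) = emeasure lborel (A i)" by simp
  qed
  have Am: "\<And>i. i \<in> {..<k} \<Longrightarrow> (\<lambda>x. x + c i) -` A i \<in> sets borel"
  proof -
    fix i assume i: "i \<in> {..<k}"
    have "(\<lambda>x. x + c i) \<in> borel_measurable (borel :: real measure)" by simp
    then show "(\<lambda>x. x + c i) -` A i \<in> sets borel"
      by (rule measurable_sets_borel) (use A[OF i] in simp)
  qed
  have "emeasure (distr (LM k) (LM k) (\<lambda>u. \<lambda>i\<in>{..<k}. u i + c i)) (Pi\<^sub>E {..<k} A)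
      = emeasure (LM k) (Pi\<^sub>E {..<k} (\<lambda>i. (\<lambda>x. x + c i) -` A i))"
    by (subst emeasure_distr[OF meas]) (use A Am pre in \<open>auto intro: sets_PiM_I_finite simp: add.commute\<close>)
  also have "\<dots> = (\<Prod>i\<in>{..<k}. emeasure lborel ((\<lambda>x. x + c i) -` A i))"
    by (rule lb_prod.emeasure_PiM) (use A Am in \<open>auto simp: add.commute\<close>)
  also have "\<dots> = (\<Prod>i\<in>{..<k}. emeasure lborel (A i))"
    by (rule prod.cong) (use Ai in auto)
  finally show "emeasure (distr (LM k) (LM k) (\<lambda>u. \<lambda>i\<in>{..<k}. u i + c i)) (Pi\<^sub>E {..<k} A) = (\<Prod>i\<in>{..<k}. emeasure lborel (A i))" .
qed

lemma LM_shift_integral: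
  fixes h :: "real \<Rightarrow> real"
  assumes h: "h \<in> borel_measurable borel"
  shows "integral\<^sup>L (LM k) (\<lambda>u. h (\<Sum>i<k. (u i - c i)\<^sup>2)) = integral\<^sup>L (LM k) (\<lambda>u. h (\<Sum>i<k. (u i)\<^sup>2))"
proof -
  let ?T = "\<lambda>u. \<lambda>i\<in>{..<k}. u i + (- c i)"
  have meas: "?T \<in> measurable (LM k) (LM k)" by measurable
  have hm: "(\<lambda>u. h (\<Sum>i<k. (u i)\<^sup>2)) \<in> borel_measurable (LM k)"
    using h by measurable
  have "integral\<^sup>L (LM k) (\<lambda>u. h (\<Sum>i<k. (u i)\<^sup>2)) = integral\<^sup>L (distr (LM k) (LM k) ?T) (\<lambda>u. h (\<Sum>i<k. (u i)\<^sup>2))"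
    using LM_shift[of k "\<lambda>i. - c i"] by simp
  also have "\<dots> = integral\<^sup>L (LM k) (\<lambda>u. h (\<Sum>i<k. (?T u i)\<^sup>2))"
    by (rule integral_distr[OF meas hm])
  also have "\<dots> = integral\<^sup>L (LM k) (\<lambda>u. h (\<Sum>i<k. (u i - c i)\<^sup>2))"
    by simp
  finally show ?thesis by simp
qed

lemma hyperplane_delta_Phi:
  fixes \<theta> y :: "'a::euclidean_space"
  assumes n1: "norm \<theta> = 1" and cont: "continuous_on UNIV \<Lambda>"
  shows "hyperplane_delta \<theta> \<rho> (\<lambda>z. \<Lambda> (norm (y - z))) = Phi (DIM('a) - 1) (y \<bullet> \<theta> - \<rho>) \<Lambda>"
proof -
  let ?k = "DIM('a) - 1"
  let ?e = "hp_frame \<theta>"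
  have of: "orthoframe \<theta> ?e" by (rule hp_frame_ok[OF n1])
  have tt: "\<theta> \<bullet> \<theta> = 1" using n1 by (simp add: dot_square_norm)
  define s where "s = y \<bullet> \<theta> - \<rho>"
  define c where "c i = y \<bullet> ?e i" for i
  have eth: "\<And>i. i < ?k \<Longrightarrow> ?e i \<bullet> \<theta> = 0" using of by (auto simp: orthoframe_def)
  have exp: "y - \<rho> *\<^sub>R \<theta> = s *\<^sub>R \<theta> + (\<Sum>i<?k. c i *\<^sub>R ?e i)"
  proof -
    have "y - \<rho> *\<^sub>R \<theta> = ((y - \<rho> *\<^sub>R \<theta>) \<bullet> \<theta>) *\<^sub>R \<theta> + (\<Sum>i<?k. ((y - \<rho> *\<^sub>R \<theta>) \<bullet> ?e i) *\<^sub>R ?e i)"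
      by (rule frame_expand[OF of n1])
    also have "\<dots> = s *\<^sub>R \<theta> + (\<Sum>i<?k. c i *\<^sub>R ?e i)"
    proof -
      have "(y - \<rho> *\<^sub>R \<theta>) \<bullet> \<theta> = s" using tt by (simp add: s_def inner_diff_left)
      moreover have "(\<Sum>i<?k. ((y - \<rho> *\<^sub>R \<theta>) \<bullet> ?e i) *\<^sub>R ?e i) = (\<Sum>i<?k. c i *\<^sub>R ?e i)"
      proof (rule sum.cong)
        fix i assume "i \<in> {..<?k}"
        then have "\<theta> \<bullet> ?e i = 0" using eth by (simp add: inner_commute)
        then show "((y - \<rho> *\<^sub>R \<theta>) \<bullet> ?e i) *\<^sub>R ?e i = c i *\<^sub>R ?e i"
          by (simp add: c_def inner_diff_left)
      qed simp
      ultimately show ?thesis by simp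
    qed
    finally show ?thesis .
  qed
  have pt: "\<Lambda> (norm (y - (\<rho> *\<^sub>R \<theta> + (\<Sum>i<?k. u i *\<^sub>R ?e i)))) = \<Lambda> (sqrt (s\<^sup>2 + (\<Sum>i<?k. (u i - c i)\<^sup>2)))" for u
  proof -
    have "y - (\<rho> *\<^sub>R \<theta> + (\<Sum>i<?k. u i *\<^sub>R ?e i)) = s *\<^sub>R \<theta> + (\<Sum>i<?k. (c i - u i) *\<^sub>R ?e i)"
      using exp by (simp add: algebra_simps sum_subtractf scaleR_diff_left)
    then have "(norm (y - (\<rho> *\<^sub>R \<theta> + (\<Sum>i<?k. u i *\<^sub>R ?e i))))\<^sup>2 = s\<^sup>2 + (\<Sum>i<?k. (c i - u i)\<^sup>2)"
      using frame_norm[OF of n1] by simp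
    also have "\<dots> = s\<^sup>2 + (\<Sum>i<?k. (u i - c i)\<^sup>2)" by (simp add: power2_commute)
    finally have "norm (y - (\<rho> *\<^sub>R \<theta> + (\<Sum>i<?k. u i *\<^sub>R ?e i))) = sqrt (s\<^sup>2 + (\<Sum>i<?k. (u i - c i)\<^sup>2))"
      by (metis norm_ge_zero real_sqrt_unique)
    then show ?thesis by simp
  qed
  have hm: "(\<lambda>x. \<Lambda> (sqrt (s\<^sup>2 + x))) \<in> borel_measurable borel"
    using borel_measurable_continuous_onI[OF cont] by measurable
  have "hyperplane_delta \<theta> \<rho> (\<lambda>z. \<Lambda> (norm (y - z))) = integral\<^sup>L (LM ?k) (\<lambda>u. \<Lambda> (sqrt (s\<^sup>2 + (\<Sum>i<?k. (u i - c i)\<^sup>2))))"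
    unfolding hyperplane_delta_def using pt by simp
  also have "\<dots> = Phi ?k s \<Lambda>"
    unfolding Phi_def using LM_shift_integral[OF hm] by simp
  finally show ?thesis by (simp add: s_def)
qed


lemma Phi_zero:
  assumes "\<forall>t\<ge>\<bar>s\<bar>. \<Lambda> t = 0"
  shows "Phi k s \<Lambda> = 0"
proof -
  have "\<And>v. \<Lambda> (sqrt (s\<^sup>2 + (\<Sum>i<k. (v i)\<^sup>2))) = 0"
  proof -
    fix v :: "nat \<Rightarrow> real"
    have "sqrt (s\<^sup>2) \<le> sqrt (s\<^sup>2 + (\<Sum>i<k. (v i)\<^sup>2))"
      by (rule real_sqrt_le_mono) (simp add: sum_nonneg)
    then show "\<Lambda> (sqrt (s\<^sup>2 + (\<Sum>i<k. (v i)\<^sup>2))) = 0" using assms by simp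
  qed
  then show ?thesis by (simp add: Phi_def)
qed

lemma box_emeasure:
  "emeasure (LM k) (Pi\<^sub>E {..<k} (\<lambda>_. {-r..r})) = ennreal ((2*r)^k)" if "r \<ge> 0"
proof -
  have "emeasure (LM k) (Pi\<^sub>E {..<k} (\<lambda>_. {-r..r})) = (\<Prod>i\<in>{..<k}. emeasure lborel {-r..r})"
    by (rule lb_prod.emeasure_PiM) auto
  also have "\<dots> = (\<Prod>i\<in>{..<k}. ennreal (2*r))" using that by simp
  also have "\<dots> = ennreal ((2*r)^k)" using that by (simp add: ennreal_power)
  finally show ?thesis .
qed

lemma Phi_pos:
  assumes cont: "continuous_on UNIV \<Lambda>" and nn: "\<And>t. \<Lambda> t \<ge> 0" and pos: "\<Lambda> \<bar>s\<bar> > 0"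
    and supp: "\<And>t. t \<ge> R \<Longrightarrow> \<Lambda> t = 0"
  shows "Phi k s \<Lambda> > 0"
proof -
  define g where "g v = \<Lambda> (sqrt (s\<^sup>2 + (\<Sum>i<k. (v i)\<^sup>2)))" for v :: "nat \<Rightarrow> real"
  define h where "h x = \<Lambda> (sqrt (s\<^sup>2 + x))" for x
  have hc: "continuous_on UNIV h" unfolding h_def
    by (intro continuous_on_compose2[OF cont] continuous_intros) auto
  have gm: "g \<in> borel_measurable (LM k)"
    unfolding g_def using borel_measurable_continuous_onI[OF cont] by measurable
  have h0: "h 0 = \<Lambda> \<bar>s\<bar>" by (simp add: h_def)
  obtain B where B: "\<And>t. t \<in> {0..max R 0} \<Longrightarrow> norm (\<Lambda> t) \<le> B"
    using compact_imp_bounded[OF compact_continuous_image[OF continuous_on_subset[OF cont] compact_Icc]]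
    unfolding bounded_iff by blast
  define R' where "R' = max R 0"
  have gB: "norm (g v) \<le> norm (B * indicator (Pi\<^sub>E {..<k} (\<lambda>_. {-R'..R'})) v)" if "v \<in> space (LM k)" for v
  proof (cases "v \<in> Pi\<^sub>E {..<k} (\<lambda>_. {-R'..R'})")
    case True
    have "g v = \<Lambda> (sqrt (s\<^sup>2 + (\<Sum>i<k. (v i)\<^sup>2)))" by (simp add: g_def)
    show ?thesis
    proof (cases "sqrt (s\<^sup>2 + (\<Sum>i<k. (v i)\<^sup>2)) \<le> R'")
      case True
      have "0 \<le> sqrt (s\<^sup>2 + (\<Sum>i<k. (v i)\<^sup>2))" by (simp add: sum_nonneg)
      then have "norm (g v) \<le> B" using B True by (simp add: g_def R'_def)
      moreover have "0 \<le> B" using B[of 0] by (auto simp: R'_def)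
      ultimately show ?thesis using \<open>v \<in> Pi\<^sub>E _ _\<close> by simp
    next
      case False
      then have "g v = 0" using supp by (simp add: g_def R'_def)
      then show ?thesis by simp
    qed
  next
    case False
    have "v \<in> extensional {..<k}" using that by (simp add: space_PiM PiE_def)
    then obtain j where j: "j < k" "v j \<notin> {-R'..R'}"
      using False by (auto simp: PiE_iff)
    then have "R' < \<bar>v j\<bar>" by auto
    also have "\<bar>v j\<bar> = sqrt ((v j)\<^sup>2)" by simp
    also have "\<dots> \<le> sqrt (s\<^sup>2 + (\<Sum>i<k. (v i)\<^sup>2))"
    proof (rule real_sqrt_le_mono)
      have "(v j)\<^sup>2 \<le> (\<Sum>i<k. (v i)\<^sup>2)"
        by (rule member_le_sum) (use j in auto)
      then show "(v j)\<^sup>2 \<le> s\<^sup>2 + (\<Sum>i<k. (v i)\<^sup>2)" by (simp add: add_increasing)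
    qed
    finally have "g v = 0" using supp by (simp add: g_def R'_def)
    then show ?thesis by simp
  qed
  have boxfin: "emeasure (LM k) (Pi\<^sub>E {..<k} (\<lambda>_. {-R'..R'})) < \<infinity>"
    using box_emeasure[of R' k] by (simp add: R'_def)
  have boxm: "Pi\<^sub>E {..<k} (\<lambda>_. {-R'..R'}) \<in> sets (LM k)"
    by (rule sets_PiM_I_finite) auto
  have gi: "integrable (LM k) g"
  proof -
    have fi: "integrable (LM k) (\<lambda>v. B * indicator (Pi\<^sub>E {..<k} (\<lambda>_. {-R'..R'})) v)"
      by (rule integrable_mult_right) (rule integrable_real_indicator[OF boxm boxfin])
    show ?thesis
      by (rule Bochner_Integration.integrable_bound[OF fi gm]) (rule AE_I2, rule gB)
  qed
  have "isCont h 0" using hc by (simp add: continuous_on_eq_continuous_at)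
  then obtain \<delta> where d: "\<delta> > 0" "\<And>x. dist x 0 < \<delta> \<Longrightarrow> dist (h x) (h 0) < h 0 / 2"
    using pos h0 unfolding continuous_at_eps_delta by (metis half_gt_zero)
  define \<epsilon> where "\<epsilon> = sqrt (\<delta> / (k + 1))"
  have \<epsilon>0: "\<epsilon> > 0" using d by (simp add: \<epsilon>_def)
  have e2: "\<epsilon>\<^sup>2 = \<delta> / (k+1)" using d by (simp add: \<epsilon>_def)
  define Q where "Q = Pi\<^sub>E {..<k} (\<lambda>_. {-\<epsilon>..\<epsilon>})"
  have Qm: "Q \<in> sets (LM k)" unfolding Q_def by (rule sets_PiM_I_finite) auto
  have Qfin: "emeasure (LM k) Q = ennreal ((2*\<epsilon>)^k)"
    unfolding Q_def using box_emeasure[of \<epsilon> k] \<epsilon>0 by simp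
  have lb: "h 0 / 2 * indicator Q v \<le> g v" for v
  proof (cases "v \<in> Q")
    case True
    have "(\<Sum>i<k. (v i)\<^sup>2) \<le> (\<Sum>i<k. \<epsilon>\<^sup>2)"
    proof (rule sum_mono)
      fix i assume "i \<in> {..<k}"
      then have "\<bar>v i\<bar> \<le> \<epsilon>" using True by (force simp: Q_def PiE_iff abs_le_iff)
      then show "(v i)\<^sup>2 \<le> \<epsilon>\<^sup>2" by (metis abs_le_square_iff abs_of_pos \<epsilon>0)
    qed
    also have "\<dots> = k * (\<delta> / (k+1))" using e2 by simp
    also have "\<dots> < \<delta>" using d(1) by (simp add: field_simps)
    finally have "dist (\<Sum>i<k. (v i)\<^sup>2) 0 < \<delta>" by (simp add: sum_nonneg)
    then have "dist (h (\<Sum>i<k. (v i)\<^sup>2)) (h 0) < h 0 / 2" by (rule d(2))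
    then have "h 0 / 2 \<le> h (\<Sum>i<k. (v i)\<^sup>2)" unfolding dist_real_def abs_less_iff by linarith
    then show ?thesis using True by (simp add: g_def h_def)
  next
    case False
    then show ?thesis using nn by (simp add: g_def)
  qed
  have "0 < h 0 / 2 * measure (LM k) Q"
    using pos h0 Qfin \<epsilon>0 by (simp add: measure_def)
  also have "h 0 / 2 * measure (LM k) Q = integral\<^sup>L (LM k) (\<lambda>v. h 0 / 2 * indicator Q v)"
    using Qm by simp
  also have "\<dots> \<le> integral\<^sup>L (LM k) g"
    by (rule integral_mono'[OF gi]) (use lb nn in \<open>auto simp: g_def\<close>)
  finally show ?thesis unfolding Phi_def g_def .

qed


lemma regroup:
  fixes d a :: "nat \<Rightarrow> real" and P :: "real \<Rightarrow> real"
  assumes "finite D" "d ` {..<m} \<subseteq> D"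
  shows "(\<Sum>i<m. a i * P (d i)) = (\<Sum>t\<in>D. (\<Sum>i<m. if d i = t then a i else 0) * P t)"
proof -
  have "(\<Sum>t\<in>D. (\<Sum>i<m. if d i = t then a i else 0) * P t) = (\<Sum>t\<in>D. \<Sum>i<m. (if d i = t then a i * P t else 0))"
  proof (rule sum.cong[OF refl])
    fix t
    have "(\<Sum>i<m. if d i = t then a i else 0) * P t = (\<Sum>i<m. (if d i = t then a i else 0) * P t)"
      by (rule sum_distrib_right)
    also have "\<dots> = (\<Sum>i<m. if d i = t then a i * P t else 0)"
      by (rule sum.cong) auto
    finally show "(\<Sum>i<m. if d i = t then a i else 0) * P t = (\<Sum>i<m. if d i = t then a i * P t else 0)" .
  qed
  also have "\<dots> = (\<Sum>i<m. \<Sum>t\<in>D. (if d i = t then a i * P t else 0))"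
    by (rule sum.swap)
  also have "\<dots> = (\<Sum>i<m. a i * P (d i))"
  proof (rule sum.cong)
    fix i assume "i \<in> {..<m}"
    then have "d i \<in> D" using assms by auto
    then show "(\<Sum>t\<in>D. (if d i = t then a i * P t else 0)) = a i * P (d i)"
      using assms(1) by (simp add: sum.delta)
  qed simp
  finally show ?thesis by simp
qed

lemma match:
  fixes d d' a a' :: "nat \<Rightarrow> real" and P :: "real \<Rightarrow> (real \<Rightarrow> real) \<Rightarrow> real"
  assumes dnn: "\<And>i. i < m \<Longrightarrow> d i \<ge> 0" and d'nn: "\<And>i. i < m \<Longrightarrow> d' i \<ge> 0"
    and dinj: "inj_on d {..<m}" and a0: "\<And>i. i < m \<Longrightarrow> a i \<noteq> 0"
    and eq: "\<And>\<Lambda>. continuous_on UNIV \<Lambda> \<Longrightarrow> (\<And>t. \<Lambda> t \<ge> 0) \<Longrightarrow> (\<exists>R. \<forall>t\<ge>R. \<Lambda> t = 0) \<Longrightarrow>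
        (\<Sum>i<m. a i * P (d i) \<Lambda>) = (\<Sum>i<m. a' i * P (d' i) \<Lambda>)"
    and Pz: "\<And>s \<Lambda>. (\<forall>t\<ge>s. \<Lambda> t = 0) \<Longrightarrow> P s \<Lambda> = 0"
    and Pp: "\<And>s \<Lambda> R. s \<ge> 0 \<Longrightarrow> continuous_on UNIV \<Lambda> \<Longrightarrow> (\<And>t. \<Lambda> t \<ge> 0) \<Longrightarrow> \<Lambda> s > 0 \<Longrightarrow> (\<And>t. t \<ge> R \<Longrightarrow> \<Lambda> t = 0) \<Longrightarrow> P s \<Lambda> > 0"
  shows "\<exists>\<sigma>. bij_betw \<sigma> {..<m} {..<m} \<and> (\<forall>j<m. d' j = d (\<sigma> j) \<and> a' j = a (\<sigma> j))"
proof -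
  define D where "D = d ` {..<m} \<union> d' ` {..<m}"
  have fD: "finite D" by (simp add: D_def)
  define E where "E t = (\<Sum>i<m. if d i = t then a i else 0)" for t
  define E' where "E' t = (\<Sum>i<m. if d' i = t then a' i else 0)" for t
  have EE: "E t = E' t" if tD: "t \<in> D" for t
  proof (rule ccontr)
    assume ne: "E t \<noteq> E' t"
    define S where "S = {t\<in>D. E t \<noteq> E' t}"
    have fS: "finite S" "S \<noteq> {}" using fD tD ne by (auto simp: S_def)
    define e where "e = Min S"
    have eS: "e \<in> S" using fS by (simp add: e_def)
    have emin: "E t = E' t" if "t \<in> D" "t < e" for t
    proof (rule ccontr)
      assume "E t \<noteq> E' t"
      then have "t \<in> S" using that by (simp add: S_def)
      then have "e \<le> t" unfolding e_def using Min_le fS(1) by blast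
      then show False using that by simp
    qed
    define U where "U = {t\<in>D. t > e}"
    define e' where "e' = (if U = {} then e + 1 else Min U)"
    have fU: "finite U" using fD by (simp add: U_def)
    have ee': "e < e'" using fU by (auto simp: e'_def U_def)
    have e'le: "\<And>t. t \<in> D \<Longrightarrow> t > e \<Longrightarrow> e' \<le> t"
      using fU by (auto simp: e'_def U_def)
    define \<Lambda> where "\<Lambda> t = max 0 (e' - t)" for t :: real
    have cont: "continuous_on UNIV \<Lambda>" unfolding \<Lambda>_def by (intro continuous_intros)
    have nn: "\<And>t. \<Lambda> t \<ge> 0" by (simp add: \<Lambda>_def)
    have supp: "\<And>t. t \<ge> e' \<Longrightarrow> \<Lambda> t = 0" by (simp add: \<Lambda>_def)
    have "(\<Sum>i<m. a i * P (d i) \<Lambda>) = (\<Sum>i<m. a' i * P (d' i) \<Lambda>)"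
      by (rule eq[OF cont nn]) (use supp in blast)
    moreover have "(\<Sum>i<m. a i * P (d i) \<Lambda>) = (\<Sum>t\<in>D. E t * P t \<Lambda>)"
      unfolding E_def by (rule regroup[OF fD]) (auto simp: D_def)
    moreover have "(\<Sum>i<m. a' i * P (d' i) \<Lambda>) = (\<Sum>t\<in>D. E' t * P t \<Lambda>)"
      unfolding E'_def by (rule regroup[OF fD]) (auto simp: D_def)
    ultimately have z: "(\<Sum>t\<in>D. (E t - E' t) * P t \<Lambda>) = 0"
      by (simp add: left_diff_distrib sum_subtractf)
    have eD: "e \<in> D" and neq: "E e \<noteq> E' e" using eS by (auto simp: S_def)
    have "(\<Sum>t\<in>D. (E t - E' t) * P t \<Lambda>) = (E e - E' e) * P e \<Lambda> + (\<Sum>t\<in>D - {e}. (E t - E' t) * P t \<Lambda>)"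
      using fD eD by (simp add: sum.remove)
    also have "(\<Sum>t\<in>D - {e}. (E t - E' t) * P t \<Lambda>) = 0"
    proof (rule sum.neutral, rule ballI)
      fix t assume t: "t \<in> D - {e}"
      show "(E t - E' t) * P t \<Lambda> = 0"
      proof (cases "t < e")
        case True then show ?thesis using emin t by simp
      next
        case False
        then have "t > e" using t by auto
        then have "e' \<le> t" using e'le t by auto
        then have "P t \<Lambda> = 0" using supp by (intro Pz) auto
        then show ?thesis by simp
      qed
    qed
    finally have "(E e - E' e) * P e \<Lambda> = 0" using z by simp
    moreover have "P e \<Lambda> > 0"
    proof (rule Pp[OF _ cont nn _ supp])
      show "e \<ge> 0" using eD dnn d'nn by (auto simp: D_def)
    qed (use ee' in \<open>simp add: \<Lambda>_def\<close>)
    ultimately show False using neq by simp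
  qed
  have Ed: "E (d i) = a i" if "i < m" for i
  proof -
    have "E (d i) = (\<Sum>l<m. if l = i then a l else 0)"
      unfolding E_def
      by (rule sum.cong) (use dinj that in \<open>auto simp: inj_on_def\<close>)
    also have "\<dots> = a i" using that by simp
    finally show ?thesis .
  qed
  have sub: "d ` {..<m} \<subseteq> d' ` {..<m}"
  proof
    fix t assume "t \<in> d ` {..<m}"
    then obtain i where i: "i < m" "t = d i" by auto
    have "E' t = a i" using EE[of t] Ed[OF i(1)] i by (simp add: D_def)
    then have "E' t \<noteq> 0" using a0 i by simp
    have "\<exists>l<m. d' l = t"
    proof (rule ccontr)
      assume "\<not> (\<exists>l<m. d' l = t)"
      then have "E' t = 0" unfolding E'_def by (intro sum.neutral) auto
      with \<open>E' t \<noteq> 0\<close> show False by simp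
    qed
    then obtain l where "l < m" "d' l = t" by blast
    then show "t \<in> d' ` {..<m}" by auto
  qed
  have cd: "card (d ` {..<m}) = m" using dinj by (simp add: card_image)
  have cd': "card (d' ` {..<m}) \<le> m" using card_image_le[of "{..<m}" d'] by simp
  have seq: "d ` {..<m} = d' ` {..<m}"
    using sub cd cd' by (metis card_seteq finite_imageI finite_lessThan)
  have d'inj: "inj_on d' {..<m}"
    using seq cd by (simp add: eq_card_imp_inj_on)
  define \<sigma> where "\<sigma> = inv_into {..<m} d \<circ> d'"
  have sig: "\<sigma> j < m \<and> d (\<sigma> j) = d' j" if "j < m" for j
  proof -
    have "d' j \<in> d ` {..<m}" using seq that by auto
    then have "inv_into {..<m} d (d' j) \<in> {..<m}" "d (inv_into {..<m} d (d' j)) = d' j"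
      by (rule inv_into_into, rule f_inv_into_f)
    then show ?thesis unfolding \<sigma>_def by simp
  qed
  have bij: "bij_betw \<sigma> {..<m} {..<m}"
  proof -
    have "inj_on \<sigma> {..<m}"
    proof (rule inj_onI)
      fix i j assume "i \<in> {..<m}" "j \<in> {..<m}" "\<sigma> i = \<sigma> j"
      then have "d' i = d' j" using sig by (metis lessThan_iff)
      then show "i = j" using d'inj \<open>i \<in> _\<close> \<open>j \<in> _\<close> by (simp add: inj_on_def)
    qed
    moreover have "\<sigma> ` {..<m} \<subseteq> {..<m}" using sig by auto
    moreover have "\<sigma> ` {..<m} = {..<m}"
      by (rule endo_inj_surj) (use calculation in auto)
    ultimately show ?thesis by (simp add: bij_betw_def)
  qed
  have "\<forall>j<m. d' j = d (\<sigma> j) \<and> a' j = a (\<sigma> j)"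
  proof (intro allI impI conjI)
    fix j assume j: "j < m"
    show "d' j = d (\<sigma> j)" using sig[OF j] by simp
    have "E' (d' j) = a' j"
    proof -
      have "E' (d' j) = (\<Sum>l<m. if l = j then a' l else 0)"
        unfolding E'_def
        by (rule sum.cong) (use d'inj j in \<open>auto simp: inj_on_def\<close>)
      then show ?thesis using j by simp
    qed
    moreover have "E (d' j) = a (\<sigma> j)" using sig[OF j] Ed by metis
    moreover have "d' j \<in> D" using j by (auto simp: D_def)
    ultimately show "a' j = a (\<sigma> j)" using EE by metis
  qed
  with bij show ?thesis by blast
qed


lemma hyp_card:
  assumes "no_hyperplane_contains_more n N y" "w \<noteq> 0"
  shows "card {j. j < N \<and> y j \<bullet> w = c} \<le> n"
  using assms by (simp add: no_hyperplane_contains_more_def)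

lemma bad_count:
  fixes \<theta> :: "nat \<Rightarrow> 'a::euclidean_space"
  assumes adm: "admissible_params m a \<theta> \<rho>" and nh: "no_hyperplane_contains_more n N y"
  shows "card {j. j < N \<and> \<not> inj_on (\<lambda>i. \<bar>y j \<bullet> \<theta> i - \<rho> i\<bar>) {..<m}} \<le> n * m * (m - 1)"
proof -
  define S where "S i l = (if i < l then {j. j < N \<and> y j \<bullet> (\<theta> i - \<theta> l) = \<rho> i - \<rho> l}
                              else {j. j < N \<and> y j \<bullet> (\<theta> i + \<theta> l) = \<rho> i + \<rho> l})" for i l
  have rpos: "\<And>i. i < m \<Longrightarrow> \<rho> i > 0" using adm by (simp add: admissible_params_def)
  have hdist: "\<And>i l. i < m \<Longrightarrow> l < m \<Longrightarrow> i \<noteq> l \<Longrightarrow> {x. x \<bullet> \<theta> i = \<rho> i} \<noteq> {x. x \<bullet> \<theta> l = \<rho> l}"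
    using adm by (simp add: admissible_params_def)
  have cS: "card (S i l) \<le> n" if il: "i < m" "l < m" "i \<noteq> l" for i l
  proof (cases "i < l")
    case True
    show ?thesis
    proof (cases "\<theta> i - \<theta> l = 0")
      case False
      then show ?thesis using hyp_card[OF nh False] True by (simp add: S_def)
    next
      case z: True
      then have "\<theta> i = \<theta> l" by simp
      then have "\<rho> i \<noteq> \<rho> l" using hdist[OF il] by auto
      then have "S i l = {}" using True z by (auto simp: S_def)
      then show ?thesis by simp
    qed
  next
    case False
    show ?thesis
    proof (cases "\<theta> i + \<theta> l = 0")
      case nz: False
      then show ?thesis using hyp_card[OF nh nz] False by (simp add: S_def)
    next
      case z: True
      have "\<rho> i + \<rho> l > 0" using rpos il by (simp add: add_pos_pos)
      then have "S i l = {}" using False z by (auto simp: S_def)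
      then show ?thesis by simp
    qed
  qed
  have sub: "{j. j < N \<and> \<not> inj_on (\<lambda>i. \<bar>y j \<bullet> \<theta> i - \<rho> i\<bar>) {..<m}} \<subseteq> (\<Union>i\<in>{..<m}. \<Union>l\<in>{..<m} - {i}. S i l)"
  proof
    fix j assume "j \<in> {j. j < N \<and> \<not> inj_on (\<lambda>i. \<bar>y j \<bullet> \<theta> i - \<rho> i\<bar>) {..<m}}"
    then obtain i l where j: "j < N" and il: "i < m" "l < m" "i \<noteq> l"
      and eq: "\<bar>y j \<bullet> \<theta> i - \<rho> i\<bar> = \<bar>y j \<bullet> \<theta> l - \<rho> l\<bar>"
      by (auto simp: inj_on_def)
    have "y j \<bullet> \<theta> i - \<rho> i = y j \<bullet> \<theta> l - \<rho> l \<or> y j \<bullet> \<theta> i - \<rho> i = - (y j \<bullet> \<theta> l - \<rho> l)"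
      using eq by (auto simp: abs_eq_iff)
    then show "j \<in> (\<Union>i\<in>{..<m}. \<Union>l\<in>{..<m} - {i}. S i l)"
    proof
      assume e: "y j \<bullet> \<theta> i - \<rho> i = y j \<bullet> \<theta> l - \<rho> l"
      show ?thesis
      proof (cases "i < l")
        case True
        then have "j \<in> S i l" using e j by (simp add: S_def inner_diff_right)
        then show ?thesis using il by blast
      next
        case False
        then have "l < i" using il by simp
        then have "j \<in> S l i" using e j by (simp add: S_def inner_diff_right)
        then show ?thesis using il by blast
      qed
    next
      assume e: "y j \<bullet> \<theta> i - \<rho> i = - (y j \<bullet> \<theta> l - \<rho> l)"
      show ?thesis
      proof (cases "i < l")
        case False
        then have "j \<in> S i l" using e j by (simp add: S_def inner_add_right algebra_simps)
        then show ?thesis using il by blast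
      next
        case True
        then have "\<not> l < i" by simp
        then have "j \<in> S l i" using e j by (simp add: S_def inner_add_right algebra_simps)
        then show ?thesis using il by blast
      qed
    qed
  qed
  have "card {j. j < N \<and> \<not> inj_on (\<lambda>i. \<bar>y j \<bullet> \<theta> i - \<rho> i\<bar>) {..<m}} \<le> card (\<Union>i\<in>{..<m}. \<Union>l\<in>{..<m} - {i}. S i l)"
    by (rule card_mono[OF _ sub]) (auto simp: S_def)
  also have "\<dots> \<le> (\<Sum>i\<in>{..<m}. card (\<Union>l\<in>{..<m} - {i}. S i l))"
    by (rule card_UN_le) simp
  also have "\<dots> \<le> (\<Sum>i\<in>{..<m}. \<Sum>l\<in>{..<m} - {i}. card (S i l))"
    by (intro sum_mono card_UN_le) simp
  also have "\<dots> \<le> (\<Sum>i\<in>{..<m}. \<Sum>l\<in>{..<m} - {i}. n)"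
    by (intro sum_mono) (use cS in auto)
  also have "\<dots> = m * ((m - 1) * n)" by simp
  finally show ?thesis by (simp add: mult.commute mult.left_commute)
qed

lemma hyper_match:
  fixes \<theta> \<theta>' :: "'a::euclidean_space"
  assumes nh: "no_hyperplane_contains_more n N y"
    and n1: "norm \<theta> = 1" "norm \<theta>' = 1" and rp: "\<rho> > 0" "\<rho>' > 0"
    and G: "G \<subseteq> {..<N}" "card G \<ge> 2 * n + 1"
    and eq: "\<And>j. j \<in> G \<Longrightarrow> \<bar>y j \<bullet> \<theta> - \<rho>\<bar> = \<bar>y j \<bullet> \<theta>' - \<rho>'\<bar>"
  shows "\<theta> = \<theta>' \<and> \<rho> = \<rho>'"
proof -
  define A where "A = {j. j < N \<and> y j \<bullet> (\<theta> - \<theta>') = \<rho> - \<rho>'}"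
  define B where "B = {j. j < N \<and> y j \<bullet> (\<theta> + \<theta>') = \<rho> + \<rho>'}"
  have GAB: "G \<subseteq> A \<union> B"
  proof
    fix j assume j: "j \<in> G"
    then have "y j \<bullet> \<theta> - \<rho> = y j \<bullet> \<theta>' - \<rho>' \<or> y j \<bullet> \<theta> - \<rho> = - (y j \<bullet> \<theta>' - \<rho>')"
      using eq[OF j] by (auto simp: abs_eq_iff)
    then show "j \<in> A \<union> B" using j G(1)
      by (auto simp: A_def B_def inner_diff_right inner_add_right algebra_simps)
  qed
  have fA: "finite A" "finite B" by (auto simp: A_def B_def)
  have cG: "card G \<le> card A + card B"
    using card_mono[OF _ GAB] card_Un_le[of A B] fA by simp
  have th0: "\<theta> \<noteq> 0" using n1 by auto
  have tpp: "\<theta> + \<theta>' \<noteq> 0"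
  proof
    assume z: "\<theta> + \<theta>' = 0"
    then have "B = {}" using rp by (auto simp: B_def)
    moreover have "\<theta> - \<theta>' \<noteq> 0" using z th0 by (metis add_diff_cancel diff_0 diff_add_cancel minus_diff_eq add.commute scaleR_2 eq_neg_iff_add_eq_0 scaleR_eq_0_iff zero_neq_numeral)
    then have "card A \<le> n" unfolding A_def by (rule hyp_card[OF nh])
    ultimately show False using cG G(2) by simp
  qed
  have cB: "card B \<le> n" unfolding B_def by (rule hyp_card[OF nh tpp])
  have tt: "\<theta> = \<theta>'"
  proof (rule ccontr)
    assume "\<theta> \<noteq> \<theta>'"
    then have "\<theta> - \<theta>' \<noteq> 0" by simp
    then have "card A \<le> n" unfolding A_def by (rule hyp_card[OF nh])
    then show False using cG cB G(2) by simp
  qed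
  have rr: "\<rho> = \<rho>'"
  proof (rule ccontr)
    assume "\<rho> \<noteq> \<rho>'"
    then have "A = {}" using tt by (auto simp: A_def)
    then show False using cG cB G(2) by simp
  qed
  show ?thesis using tt rr by simp
qed


lemma Phi_abs: "Phi k s \<Lambda> = Phi k \<bar>s\<bar> \<Lambda>"
  by (simp add: Phi_def)

lemma smt_Phi:
  fixes \<theta> :: "nat \<Rightarrow> 'a::euclidean_space"
  assumes adm: "admissible_params m a \<theta> \<rho>" and cont: "continuous_on UNIV \<Lambda>"
  shows "smt_dist y (delta_sum m a \<theta> \<rho>) \<Lambda> = (\<Sum>i<m. a i * Phi (DIM('a) - 1) \<bar>y \<bullet> \<theta> i - \<rho> i\<bar> \<Lambda>)"
  unfolding smt_dist_def delta_sum_def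
proof (rule sum.cong[OF refl])
  fix i assume "i \<in> {..<m}"
  then have "norm (\<theta> i) = 1" using adm by (simp add: admissible_params_def)
  then show "a i * hyperplane_delta (\<theta> i) (\<rho> i) (\<lambda>z. \<Lambda> (norm (y - z))) = a i * Phi (DIM('a) - 1) \<bar>y \<bullet> \<theta> i - \<rho> i\<bar> \<Lambda>"
    using hyperplane_delta_Phi[OF _ cont] Phi_abs by metis
qed

theorem theorem3p2:
  fixes m :: nat
    and a a' \<rho> \<rho>' :: "nat \<Rightarrow> real"
    and \<theta> \<theta>' :: "nat \<Rightarrow> 'a::euclidean_space"
    and y :: "nat \<Rightarrow> 'a"
  assumes "m > 0"
    and "admissible_params m a \<theta> \<rho>"
    and "admissible_params m a' \<theta>' \<rho>'"
    and "no_hyperplane_contains_more DIM('a) (DIM('a) * m * (m - 1) + 2 * DIM('a) + 1) y"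
    and "\<forall>j < DIM('a) * m * (m - 1) + 2 * DIM('a) + 1. \<forall>\<Lambda>. test_fn \<Lambda> \<longrightarrow>
           smt_dist (y j) (delta_sum m a \<theta> \<rho>) \<Lambda> = smt_dist (y j) (delta_sum m a' \<theta>' \<rho>') \<Lambda>"
  shows "\<exists>\<sigma>. bij_betw \<sigma> {..<m} {..<m} \<and>
           (\<forall>k<m. a' k = a (\<sigma> k) \<and> \<theta>' k = \<theta> (\<sigma> k) \<and> \<rho>' k = \<rho> (\<sigma> k))"
proof -
  let ?n = "DIM('a)"
  let ?k = "DIM('a) - 1"
  define N where "N = ?n * m * (m - 1) + 2 * ?n + 1"
  note adm = assms(2) and adm' = assms(3)
  have nh: "no_hyperplane_contains_more ?n N y" using assms(4) by (simp add: N_def)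
  have hyp: "\<And>j \<Lambda>. j < N \<Longrightarrow> test_fn \<Lambda> \<Longrightarrow>
      smt_dist (y j) (delta_sum m a \<theta> \<rho>) \<Lambda> = smt_dist (y j) (delta_sum m a' \<theta>' \<rho>') \<Lambda>"
    using assms(5) by (simp add: N_def)
  define d where "d j i = \<bar>y j \<bullet> \<theta> i - \<rho> i\<bar>" for j i
  define d' where "d' j i = \<bar>y j \<bullet> \<theta>' i - \<rho>' i\<bar>" for j i
  define G where "G = {j. j < N \<and> inj_on (d j) {..<m}}"
  define Bad where "Bad = {j. j < N \<and> \<not> inj_on (\<lambda>i. \<bar>y j \<bullet> \<theta> i - \<rho> i\<bar>) {..<m}}"
  have cBad: "card Bad \<le> ?n * m * (m - 1)"
    unfolding Bad_def by (rule bad_count[OF adm nh])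
  have GB: "{..<N} = G \<union> Bad" "G \<inter> Bad = {}"
  proof -
    have dj: "\<And>j. d j = (\<lambda>i. \<bar>y j \<bullet> \<theta> i - \<rho> i\<bar>)" by (rule ext) (simp add: d_def)
    show "{..<N} = G \<union> Bad" "G \<inter> Bad = {}" by (auto simp: G_def Bad_def dj)
  qed
  have "N = card G + card Bad"
    using GB card_Un_disjoint[of G Bad] by (metis card_lessThan finite_Un finite_lessThan)
  then have cG: "card G \<ge> 2 * ?n + 1" using cBad by (simp add: N_def)
  have Gsub: "G \<subseteq> {..<N}" by (auto simp: G_def)
  have a0: "\<And>i. i < m \<Longrightarrow> a i \<noteq> 0" using adm by (simp add: admissible_params_def)
  have ainj: "\<And>i l. i < m \<Longrightarrow> l < m \<Longrightarrow> a i = a l \<Longrightarrow> i = l"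
    using adm by (auto simp: admissible_params_def)
  have loc: "\<exists>\<sigma>. bij_betw \<sigma> {..<m} {..<m} \<and> (\<forall>l<m. d' j l = d j (\<sigma> l) \<and> a' l = a (\<sigma> l))"
    if jG: "j \<in> G" for j
  proof (rule match[where P = "Phi ?k"])
    show "\<And>i. i < m \<Longrightarrow> 0 \<le> d j i" "\<And>i. i < m \<Longrightarrow> 0 \<le> d' j i" by (auto simp: d_def d'_def)
    show "inj_on (d j) {..<m}" using jG by (simp add: G_def)
    show "\<And>i. i < m \<Longrightarrow> a i \<noteq> 0" by (rule a0)
    show "(\<Sum>i<m. a i * Phi ?k (d j i) \<Lambda>) = (\<Sum>i<m. a' i * Phi ?k (d' j i) \<Lambda>)"
      if c: "continuous_on UNIV \<Lambda>" and "\<And>t. 0 \<le> \<Lambda> t" and R: "\<exists>R. \<forall>t\<ge>R. \<Lambda> t = 0" for \<Lambda>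
    proof -
      have tf: "test_fn \<Lambda>" unfolding test_fn_def
        using continuous_on_subset[OF c] R by auto
      have "j < N" using jG by (simp add: G_def)
      from hyp[OF this tf] show ?thesis
        by (simp add: smt_Phi[OF adm c] smt_Phi[OF adm' c] d_def d'_def)
    qed
    show "Phi ?k s \<Lambda> = 0" if "\<forall>t\<ge>s. \<Lambda> t = 0" for s \<Lambda>
    proof -
      have "Phi ?k s \<Lambda> = Phi ?k \<bar>s\<bar> \<Lambda>" by (rule Phi_abs)
      also have "\<dots> = 0" by (rule Phi_zero) (use that in auto)
      finally show ?thesis .
    qed
    show "0 < Phi ?k s \<Lambda>" if "0 \<le> s" "continuous_on UNIV \<Lambda>" "\<And>t. 0 \<le> \<Lambda> t" "0 < \<Lambda> s"
      "\<And>t. R \<le> t \<Longrightarrow> \<Lambda> t = 0" for s \<Lambda> R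
      by (rule Phi_pos[where R = R]) (use that in auto)
  qed
  have "G \<noteq> {}" using cG by auto
  then obtain j0 where j0: "j0 \<in> G" by blast
  obtain \<sigma> where \<sigma>: "bij_betw \<sigma> {..<m} {..<m}" "\<And>l. l < m \<Longrightarrow> a' l = a (\<sigma> l)"
    using loc[OF j0] by blast
  have \<sigma>m: "\<And>l. l < m \<Longrightarrow> \<sigma> l < m" using \<sigma>(1) by (auto simp: bij_betw_def)
  have deq: "d' j l = d j (\<sigma> l)" if j: "j \<in> G" and l: "l < m" for j l
  proof -
    obtain \<tau> where \<tau>: "bij_betw \<tau> {..<m} {..<m}" "\<forall>l<m. d' j l = d j (\<tau> l) \<and> a' l = a (\<tau> l)"
      using loc[OF j] by blast
    have "\<tau> l < m" using \<tau>(1) l by (auto simp: bij_betw_def)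
    then have "\<tau> l = \<sigma> l" using ainj \<tau>(2) \<sigma>(2) \<sigma>m l by metis
    then show ?thesis using \<tau>(2) l by simp
  qed
  have "\<forall>l<m. a' l = a (\<sigma> l) \<and> \<theta>' l = \<theta> (\<sigma> l) \<and> \<rho>' l = \<rho> (\<sigma> l)"
  proof (intro allI impI)
    fix l assume l: "l < m"
    have "\<theta> (\<sigma> l) = \<theta>' l \<and> \<rho> (\<sigma> l) = \<rho>' l"
    proof (rule hyper_match[OF nh _ _ _ _ Gsub cG])
      show "norm (\<theta> (\<sigma> l)) = 1" "0 < \<rho> (\<sigma> l)" using adm \<sigma>m[OF l] by (auto simp: admissible_params_def)
      show "norm (\<theta>' l) = 1" "0 < \<rho>' l" using adm' l by (auto simp: admissible_params_def)
      show "\<bar>y j \<bullet> \<theta> (\<sigma> l) - \<rho> (\<sigma> l)\<bar> = \<bar>y j \<bullet> \<theta>' l - \<rho>' l\<bar>" if "j \<in> G" for j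
        using deq[OF that l] by (simp add: d_def d'_def)
    qed
    then show "a' l = a (\<sigma> l) \<and> \<theta>' l = \<theta> (\<sigma> l) \<and> \<rho>' l = \<rho> (\<sigma> l)" using \<sigma>(2)[OF l] by simp
  qed
  with \<sigma>(1) show ?thesis by blast
qed

end
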